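(* Let $\hat x=(\dots,x_2,x_1)\in\mathrm{Im}(\Psi^+)$ satisfy $x_m\le p_m$ for all $m\ge1$, and let $k\ge1$. The following are equivalent: (1) $c'_{2l+i_k}(x_{k+1}-p_{k+1})-c'_{2l+i_k-1}(x_k-p_k)\le0$ for all $l\ge1$; (2) $\gamma_{k+1}p_{k+1}-p_k+x_k-\gamma_{k+1}x_{k+1}\ge0$.
   Context: Let $a_1,a_2\in\mathbb Z_{\ge1}$ with $a_1a_2>4$, $A=\begin{pmatrix}2&-a_1\\-a_2&2\end{pmatrix}$, $\mathfrak g=\mathfrak g(A)$ with simple roots $\alpha_1,\alpha_2$, coroots $\alpha_i^\vee$, fundamental weights $\Lambda_1,\Lambda_2$. For $k\in\mathbb Z$, $i_k=1$ if $k$ odd, $i_k=2$ if $k$ even (so $i_k\in\{1,2\}$ is also used as an integer). $\mathbb Z^{+\infty}_{\ge0}$ is the set of sequences $(\dots,x_2,x_1)$ of nonnegative integers, almost all zero, with the Nakashima–Zelevinsky crystal structure for the sequence $(\dots,i_2,i_1)$, and $\Psi^+:\mathcal B(\infty)\hookrightarrow\mathbb Z^{+\infty}_{\ge0}$ the corresponding crystal embedding of the crystal basis of $U_q^-(\mathfrak g)$ (sending the highest element to the zero sequence). Put $\alpha=\frac{a_1a_2+\sqrt{a_1^2a_2^2-4a_1a_2}}{2a_2}$, $\beta=\frac{a_1a_2+\sqrt{a_1^2a_2^2-4a_1a_2}}{2a_1}$, $\gamma_k=\alpha$ ($k$ even), $\beta$ ($k$ odd). Fix $\lambda=k_1\Lambda_1-k_2\Lambda_2$,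 $k_1,k_2\in\mathbb Z_{>0}$, with: if $a_1,a_2\ge2$, $k_2\le k_1<(a_1-1)k_2$ or $k_1<k_2\le(a_2-1)k_1$; if $a_1=1$, $2k_1\le k_2\le(a_2-2)k_1$; if $a_2=1$, $2k_2\le k_1\le(a_1-2)k_2$. Let $p_0=k_2$, $p_1=k_1$, $p_{m+2}=a_2p_{m+1}-p_m$ ($m\ge0$ even), $p_{m+2}=a_1p_{m+1}-p_m$ ($m\ge0$ odd). Define $c'_0=0$, $c'_1=1$, $c'_{j+2}=a_2c'_{j+1}-c'_j$ ($j$ even), $c'_{j+2}=a_1c'_{j+1}-c'_j$ ($j$ odd). *)

theory Defs
  imports Complex_Main
begin

definition ik :: "nat \<Rightarrow> nat" where
  "ik k = (if odd k then 1 else 2)"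

text \<open>Generalized Cartan matrix A = [[2,-a1],[-a2,2]], entry A_{ij} = <h_i, alpha_j>.\<close>
definition cartan :: "int \<Rightarrow> int \<Rightarrow> nat \<Rightarrow> nat \<Rightarrow> int" where
  "cartan a1 a2 i j =
     (if i = j then 2 else if i = 1 then - a1 else - a2)"

text \<open>Nakashima--Zelevinsky crystal structure on Z^{+infinity}_{>=0} for the sequence
  (..., i_2, i_1).  Sequences are functions x :: nat => int, where x k is the k-th
  entry (k >= 1); entry 0 is unused.\<close>
definition sigma :: "int \<Rightarrow> int \<Rightarrow> nat \<Rightarrow> (nat \<Rightarrow> int) \<Rightarrow> int" where
  "sigma a1 a2 k x =
     x k + (\<Sum>j\<in>{j. k < j \<and> x j \<noteq> 0}. cartan a1 a2 (ik k) (ik j) * x j)"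

definition sigma_max :: "int \<Rightarrow> int \<Rightarrow> nat \<Rightarrow> (nat \<Rightarrow> int) \<Rightarrow> int" where
  "sigma_max a1 a2 i x = Max {sigma a1 a2 k x | k. 1 \<le> k \<and> ik k = i}"

definition m_f :: "int \<Rightarrow> int \<Rightarrow> nat \<Rightarrow> (nat \<Rightarrow> int) \<Rightarrow> nat" where
  "m_f a1 a2 i x =
     (LEAST k. 1 \<le> k \<and> ik k = i \<and> sigma a1 a2 k x = sigma_max a1 a2 i x)"

definition ftilde :: "int \<Rightarrow> int \<Rightarrow> nat \<Rightarrow> (nat \<Rightarrow> int) \<Rightarrow> (nat \<Rightarrow> int)" where
  "ftilde a1 a2 i x = x(m_f a1 a2 i x := x (m_f a1 a2 i x) + 1)"

text \<open>Image of the embedding Psi^+ : B(infinity) -> Z^{+infinity}_{>=0}: since Psi^+ is a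
  strict crystal embedding sending u_infinity to the zero sequence and B(infinity) is
  generated from u_infinity by the Kashiwara operators f_i, its image is the set of
  sequences obtained from the zero sequence by repeatedly applying the NZ operators f_i.\<close>
inductive_set ImPsi :: "int \<Rightarrow> int \<Rightarrow> (nat \<Rightarrow> int) set" for a1 a2 where
  zero: "(\<lambda>_. 0) \<in> ImPsi a1 a2"
| step: "x \<in> ImPsi a1 a2 \<Longrightarrow> i \<in> {1, 2} \<Longrightarrow> ftilde a1 a2 i x \<in> ImPsi a1 a2"

definition alpha :: "int \<Rightarrow> int \<Rightarrow> real" where
  "alpha a1 a2 = (a1 * a2 + sqrt (a1^2 * a2^2 - 4 * a1 * a2)) / (2 * a2)"

definition beta :: "int \<Rightarrow> int \<Rightarrow> real" where
  "beta a1 a2 = (a1 * a2 + sqrt (a1^2 * a2^2 - 4 * a1 * a2)) / (2 * a1)"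

definition gamma :: "int \<Rightarrow> int \<Rightarrow> nat \<Rightarrow> real" where
  "gamma a1 a2 k = (if even k then alpha a1 a2 else beta a1 a2)"

fun pseq :: "int \<Rightarrow> int \<Rightarrow> int \<Rightarrow> int \<Rightarrow> nat \<Rightarrow> int" where
  "pseq a1 a2 k1 k2 0 = k2"
| "pseq a1 a2 k1 k2 (Suc 0) = k1"
| "pseq a1 a2 k1 k2 (Suc (Suc m)) =
     (if even m then a2 else a1) * pseq a1 a2 k1 k2 (Suc m) - pseq a1 a2 k1 k2 m"

fun cprime :: "int \<Rightarrow> int \<Rightarrow> nat \<Rightarrow> int" where
  "cprime a1 a2 0 = 0"
| "cprime a1 a2 (Suc 0) = 1"
| "cprime a1 a2 (Suc (Suc j)) =
     (if even j then a2 else a1) * cprime a1 a2 (Suc j) - cprime a1 a2 j"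

end

theory Submission
  imports Defs
begin

lemma cp_gen: "cprime a1 a2 (Suc (Suc n)) = (if even n then a2 else a1) * cprime a1 a2 (Suc n) - cprime a1 a2 n"
  by simp

lemma cp_odd: "cprime a1 a2 (2*l+3) = a1 * cprime a1 a2 (2*l+2) - cprime a1 a2 (2*l+1)"
proof -
  have e: "Suc (2*l+1) = 2*l+2" "Suc (2*l+2) = 2*l+3" "odd (2*l+1)" by simp_all
  show ?thesis using cp_gen[of a1 a2 "2*l+1"] by (simp only: e if_False)
qed

lemma cp_even: "cprime a1 a2 (2*l+2) = a2 * cprime a1 a2 (2*l+1) - cprime a1 a2 (2*l)"
proof -
  have e: "Suc (2*l) = 2*l+1" "Suc (2*l+1) = 2*l+2" "even (2*l)" by simp_all
  show ?thesis using cp_gen[of a1 a2 "2*l"] by (simp only: e if_True)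
qed

lemma cp_even4: "cprime a1 a2 (2*l+4) = a2 * cprime a1 a2 (2*l+3) - cprime a1 a2 (2*l+2)"
proof -
  have e: "Suc (2*l+2) = 2*l+3" "Suc (2*l+3) = 2*l+4" "even (2*l+2)" by simp_all
  show ?thesis using cp_gen[of a1 a2 "2*l+2"] by (simp only: e if_True)
qed

lemma key:
  fixes A B e :: "nat \<Rightarrow> real" and g u v :: real
  assumes A: "\<forall>l\<ge>1. A l \<ge> 1" and B: "\<forall>l\<ge>1. B l = g * A l + e l"
    and e: "\<forall>l. e l \<ge> 0" and lim: "\<forall>d>0. \<exists>l\<ge>1. e l < d"
    and u: "u \<ge> 0" and g: "g \<ge> 0"
  shows "(\<forall>l\<ge>1. A l * v \<le> B l * u) \<longleftrightarrow> g * u - v \<ge> 0"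
proof
  assume h: "\<forall>l\<ge>1. A l * v \<le> B l * u"
  show "g * u - v \<ge> 0"
  proof (rule ccontr)
    assume "\<not> g * u - v \<ge> 0"
    hence d: "v - g*u > 0" by simp
    then obtain l where l: "l \<ge> 1" "e l < (v - g*u)/(u+1)" using lim u
      by (metis add_nonneg_pos divide_pos_pos zero_less_one)
    have "e l * (u+1) < v - g*u" using l(2) u by (simp add: pos_less_divide_eq)
    hence 1: "e l * u < v - g*u" using e by (smt (verit, best) distrib_left mult.commute mult_cancel_left1)
    have 2: "v - g*u \<le> A l * (v - g*u)" using A l(1) d
      by (metis mult_le_cancel_right1 order_less_imp_not_less)
    have "B l * u = g * A l * u + e l * u" using B l(1) by (simp add: algebra_simps)
    also have "\<dots> < A l * v" using 1 2 by (simp add: algebra_simps)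
    finally show False using h l(1) by fastforce
  qed
next
  assume h: "g * u - v \<ge> 0"
  show "\<forall>l\<ge>1. A l * v \<le> B l * u"
  proof (intro allI impI)
    fix l :: nat assume l: "l \<ge> 1"
    have "A l * v \<le> A l * (g * u)" using A l h by (intro mult_left_mono) auto
    also have "\<dots> \<le> A l * (g*u) + e l * u" using e u by simp
    also have "\<dots> = B l * u" using B l by (simp add: algebra_simps)
    finally show "A l * v \<le> B l * u" .
  qed
qed

lemma alg:
  fixes a1 a2 :: int
  assumes a1: "a1 \<ge> 1" and a2: "a2 \<ge> 1" and a12: "a1 * a2 > 4"
  defines "P \<equiv> real_of_int a1 * real_of_int a2"
  defines "X \<equiv> (P + sqrt (P^2 - 4*P)) / 2"
  shows "alpha a1 a2 = X / a2" "beta a1 a2 = X / a1" "X^2 = P*X - P" "P/2 < X" "X < P"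
proof -
  have P4: "P > 4" unfolding P_def using a12
    by (metis of_int_less_iff of_int_mult of_int_numeral)
  have D: "P^2 - 4*P > 0" using P4 by (simp add: power2_eq_square)
  define s where "s = sqrt (P^2 - 4*P)"
  have s2: "s^2 = P^2 - 4*P" unfolding s_def using D by simp
  have s0: "s > 0" unfolding s_def using D by simp
  have sP: "s < P"
  proof -
    have "s^2 < P^2" using s2 P4 by simp
    thus ?thesis using P4 s0 by (smt (verit) power_mono)
  qed
  have Xs: "X = (P + s)/2" unfolding X_def s_def by simp
  show "alpha a1 a2 = X / a2" unfolding alpha_def X_def P_def
    by (simp add: power_mult_distrib field_simps)
  show "beta a1 a2 = X / a1" unfolding beta_def X_def P_def
    by (simp add: power_mult_distrib field_simps)
  show "X^2 = P*X - P" unfolding Xs using s2 by (simp add: power2_eq_square field_simps)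
  show "P/2 < X" unfolding Xs using s0 by simp
  show "X < P" unfolding Xs using sP by simp
qed


lemma Eseq:
  fixes a1 a2 :: int and \<alpha> \<beta> \<mu> :: real
  assumes m1: "\<mu> * \<alpha> = a1 - \<alpha>" and m2: "(a1 - \<alpha>) * a2 - 1 = \<mu>"
      and m3: "\<mu> * \<beta> = a2 - \<beta>" and m4: "(a2 - \<beta>) * a1 - 1 = \<mu>"
  shows "real_of_int (cprime a1 a2 (2*l+1)) - \<alpha> * cprime a1 a2 (2*l) = \<mu>^l"
    "real_of_int (cprime a1 a2 (2*l+2)) - \<beta> * cprime a1 a2 (2*l+1) = \<beta> * \<mu>^(l+1)"
proof -
  define c where "c j = real_of_int (cprime a1 a2 j)" for j
  have ro: "c (2*l+3) = a1 * c (2*l+2) - c (2*l+1)" for l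
    unfolding c_def by (simp add: cp_odd)
  have re: "c (2*l+2) = a2 * c (2*l+1) - c (2*l)" for l
    unfolding c_def by (simp add: cp_even)
  have "c (2*l+1) - \<alpha> * c (2*l) = \<mu>^l"
  proof (induction l)
    case 0 then show ?case unfolding c_def by simp
  next
    case (Suc l)
    have e: "c (2 * Suc l + 1) = c (2*l+3)" "c (2 * Suc l) = c (2*l+2)" by (rule arg_cong[where f=c], simp)+
    have "c (2*l+3) - \<alpha> * c (2*l+2) = (a1 - \<alpha>) * (a2 * c (2*l+1) - c (2*l)) - c (2*l+1)"
      by (simp only: ro[of l] re[of l]) (simp add: algebra_simps)
    also have "\<dots> = ((a1 - \<alpha>) * a2 - 1) * c (2*l+1) - (a1 - \<alpha>) * c (2*l)"
      by (simp add: algebra_simps)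
    also have "\<dots> = \<mu> * (c (2*l+1) - \<alpha> * c (2*l))"
      unfolding m2 unfolding m1[symmetric] by (simp add: algebra_simps)
    finally show ?case unfolding e power_Suc Suc.IH[symmetric] .
  qed
  then show "real_of_int (cprime a1 a2 (2*l+1)) - \<alpha> * cprime a1 a2 (2*l) = \<mu>^l"
    unfolding c_def .
  have "c (2*l+2) - \<beta> * c (2*l+1) = \<beta> * \<mu>^(l+1)"
  proof (induction l)
    case 0 then show ?case unfolding c_def using m3 by (simp add: eval_nat_numeral mult.commute)
  next
    case (Suc l)
    have e: "c (2 * Suc l + 2) = c (2*l+4)" "c (2 * Suc l + 1) = c (2*l+3)" by (rule arg_cong[where f=c], simp)+
    have re': "c (2*l+4) = a2 * c (2*l+3) - c (2*l+2)"
      unfolding c_def by (simp add: cp_even4)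
    have "c (2*l+4) - \<beta> * c (2*l+3) = (a2 - \<beta>) * (a1 * c (2*l+2) - c (2*l+1)) - c (2*l+2)"
      by (simp only: re' ro[of l]) (simp add: algebra_simps)
    also have "\<dots> = ((a2 - \<beta>) * a1 - 1) * c (2*l+2) - (a2 - \<beta>) * c (2*l+1)"
      by (simp add: algebra_simps)
    also have "\<dots> = \<mu> * (c (2*l+2) - \<beta> * c (2*l+1))"
      unfolding m4 unfolding m3[symmetric] by (simp add: algebra_simps)
    finally show ?case unfolding e using Suc.IH by (simp add: algebra_simps)
  qed
  then show "real_of_int (cprime a1 a2 (2*l+2)) - \<beta> * cprime a1 a2 (2*l+1) = \<beta> * \<mu>^(l+1)"
    unfolding c_def .
qed


lemma pos_l1:
  fixes a1 a2 :: int
  assumes a1: "a1 \<ge> 1" and a2: "a2 \<ge> 1" and a12: "a1 * a2 > 4"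
  shows "\<exists>\<mu>::real. 0 < \<mu> \<and> \<mu> < 1 \<and> alpha a1 a2 > 0 \<and> beta a1 a2 > 0 \<and>
     (\<forall>l. real_of_int (cprime a1 a2 (2*l+1)) = alpha a1 a2 * cprime a1 a2 (2*l) + \<mu>^l) \<and>
     (\<forall>l. real_of_int (cprime a1 a2 (2*l+2)) = beta a1 a2 * cprime a1 a2 (2*l+1) + beta a1 a2 * \<mu>^(l+1)) \<and>
     (\<forall>l. cprime a1 a2 (2*l+1) \<ge> 1 \<and> cprime a1 a2 (2*l+2) \<ge> 1)"
proof -
  define P where "P = real_of_int a1 * real_of_int a2"
  define X where "X = (P + sqrt (P^2 - 4*P)) / 2"
  note A = alg[OF a1 a2 a12, folded P_def, folded X_def]
  have P4: "P > 4" unfolding P_def using a12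
    by (metis of_int_less_iff of_int_mult of_int_numeral)
  have X0: "X > 0" using A(4) P4 by linarith
  have ra1: "real_of_int a1 \<ge> 1" "real_of_int a2 \<ge> 1" using a1 a2 by simp_all
  define \<mu> where "\<mu> = P / X - 1"
  have mu0: "\<mu> > 0" unfolding \<mu>_def using A(5) X0 by (simp add: field_simps)
  have mu1: "\<mu> < 1" unfolding \<mu>_def using A(4) X0 by (simp add: field_simps)
  have al: "alpha a1 a2 > 0" "beta a1 a2 > 0" using A(1,2) X0 ra1 by simp_all
  have m1: "\<mu> * alpha a1 a2 = a1 - alpha a1 a2"
    unfolding A(1) \<mu>_def P_def using X0 ra1 by (simp add: field_simps)
  have m3: "\<mu> * beta a1 a2 = a2 - beta a1 a2"
    unfolding A(2) \<mu>_def P_def using X0 ra1 by (simp add: field_simps)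
  have m2: "(a1 - alpha a1 a2) * a2 - 1 = \<mu>"
  proof -
    have "(a1 - alpha a1 a2) * a2 - 1 = P - X - 1" unfolding A(1) P_def using ra1 by (simp add: field_simps)
    also have "P - X = P / X" using A(3) X0 by (simp add: field_simps power2_eq_square)
    finally show ?thesis unfolding \<mu>_def .
  qed
  have m4: "(a2 - beta a1 a2) * a1 - 1 = \<mu>"
  proof -
    have "(a2 - beta a1 a2) * a1 - 1 = P - X - 1" unfolding A(2) P_def using ra1 by (simp add: field_simps)
    also have "P - X = P / X" using A(3) X0 by (simp add: field_simps power2_eq_square)
    finally show ?thesis unfolding \<mu>_def .
  qed
  note E = Eseq[OF m1 m2 m3 m4]
  have E1: "\<forall>l. real_of_int (cprime a1 a2 (2*l+1)) = alpha a1 a2 * cprime a1 a2 (2*l) + \<mu>^l"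
    using E(1) by (simp add: algebra_simps)
  have E2: "\<forall>l. real_of_int (cprime a1 a2 (2*l+2)) = beta a1 a2 * cprime a1 a2 (2*l+1) + beta a1 a2 * \<mu>^(l+1)"
    using E(2) by (simp add: algebra_simps)
  define c where "c j = real_of_int (cprime a1 a2 j)" for j
  have "c (2*l+1) > 0 \<and> c (2*l+2) > 0" for l
  proof (induction l)
    case 0
    have "c 1 = 1" unfolding c_def by simp
    moreover have "c 2 = beta a1 a2 * c 1 + beta a1 a2 * \<mu>" using E2 unfolding c_def
      by (metis One_nat_def add_0 mult_zero_right power_one_right)
    ultimately have "c 1 > 0" "c 2 > 0" using al mu0 by (simp_all add: add_pos_pos)
    thus ?case by (simp add: numeral_2_eq_2)
  next
    case (Suc l)
    have e: "c (2 * Suc l + 1) = c (2*l+3)" "c (2 * Suc l + 2) = c (2*l+4)" "c (2 * Suc l) = c (2*l+2)"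
      by (rule arg_cong[where f=c], simp)+
    have h1: "c (2*l+3) = alpha a1 a2 * c (2*l+2) + \<mu>^(Suc l)"
      using E1 e unfolding c_def by metis
    have h2: "c (2*l+4) = beta a1 a2 * c (2*l+3) + beta a1 a2 * \<mu>^(Suc l+1)"
      using E2 e unfolding c_def by metis
    have "c (2*l+3) > 0" using h1 Suc al mu0 by (simp add: add_pos_pos)
    moreover have "c (2*l+4) > 0" using h2 calculation al mu0 by (simp add: add_pos_pos)
    ultimately show ?case using e by simp
  qed
  hence "cprime a1 a2 (2*l+1) \<ge> 1 \<and> cprime a1 a2 (2*l+2) \<ge> 1" for l
    unfolding c_def by (metis int_one_le_iff_zero_less of_int_0_less_iff)
  thus ?thesis using mu0 mu1 al E1 E2 by blast
qed

theorem proposition4p6: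
  fixes a1 a2 k1 k2 :: int and x :: "nat \<Rightarrow> int" and k :: nat
  assumes a1: "a1 \<ge> 1" and a2: "a2 \<ge> 1" and a12: "a1 * a2 > 4"
    and k1: "k1 > 0" and k2: "k2 > 0"
    and lam_both: "a1 \<ge> 2 \<and> a2 \<ge> 2 \<Longrightarrow>
                     (k2 \<le> k1 \<and> k1 < (a1 - 1) * k2) \<or> (k1 < k2 \<and> k2 \<le> (a2 - 1) * k1)"
    and lam_a1: "a1 = 1 \<Longrightarrow> 2 * k1 \<le> k2 \<and> k2 \<le> (a2 - 2) * k1"
    and lam_a2: "a2 = 1 \<Longrightarrow> 2 * k2 \<le> k1 \<and> k1 \<le> (a1 - 2) * k2"
    and xim: "x \<in> ImPsi a1 a2"
    and xle: "\<forall>m\<ge>1. x m \<le> pseq a1 a2 k1 k2 m"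
    and k: "k \<ge> 1"
  shows "(\<forall>l\<ge>1. cprime a1 a2 (2 * l + ik k) * (x (k + 1) - pseq a1 a2 k1 k2 (k + 1))
                 - cprime a1 a2 (2 * l + ik k - 1) * (x k - pseq a1 a2 k1 k2 k) \<le> 0)
     \<longleftrightarrow> gamma a1 a2 (k + 1) * pseq a1 a2 k1 k2 (k + 1) - pseq a1 a2 k1 k2 k + x k
           - gamma a1 a2 (k + 1) * x (k + 1) \<ge> 0"
  proof -
  obtain \<mu> :: real where mu0: "0 < \<mu>" and mu1: "\<mu> < 1" and al: "alpha a1 a2 > 0" "beta a1 a2 > 0"
    and E1: "\<forall>l. real_of_int (cprime a1 a2 (2*l+1)) = alpha a1 a2 * cprime a1 a2 (2*l) + \<mu>^l"
    and E2: "\<forall>l. real_of_int (cprime a1 a2 (2*l+2)) = beta a1 a2 * cprime a1 a2 (2*l+1) + beta a1 a2 * \<mu>^(l+1)"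
    and pos: "\<forall>l. cprime a1 a2 (2*l+1) \<ge> 1 \<and> cprime a1 a2 (2*l+2) \<ge> 1"
    using pos_l1[OF a1 a2 a12] by blast
  define p where "p = pseq a1 a2 k1 k2"
  define u where "u = real_of_int (p (k+1) - x (k+1))"
  define v where "v = real_of_int (p k - x k)"
  have u0: "u \<ge> 0" unfolding u_def p_def using xle by simp
  have lim: "\<forall>d>0. \<exists>l\<ge>1. \<mu>^l < d"
  proof (intro allI impI)
    fix d :: real assume "d > 0"
    then obtain n where n: "\<mu>^n < d" using real_arch_pow_inv mu1 by blast
    have "\<mu>^(n+1) \<le> \<mu>^n" using mu0 mu1 by (simp add: power_decreasing)
    thus "\<exists>l\<ge>1. \<mu>^l < d" using n by (intro exI[of _ "n+1"]) auto
  qed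
  have conv: "(cprime a1 a2 (2 * l + ik k) * (x (k + 1) - p (k + 1))
                 - cprime a1 a2 (2 * l + ik k - 1) * (x k - p k) \<le> 0) \<longleftrightarrow>
      real_of_int (cprime a1 a2 (2 * l + ik k - 1)) * v \<le> real_of_int (cprime a1 a2 (2 * l + ik k)) * u" for l
  proof -
    have "(cprime a1 a2 (2 * l + ik k) * (x (k + 1) - p (k + 1))
                 - cprime a1 a2 (2 * l + ik k - 1) * (x k - p k) \<le> 0) \<longleftrightarrow>
         cprime a1 a2 (2 * l + ik k - 1) * (p k - x k) \<le> cprime a1 a2 (2 * l + ik k) * (p (k + 1) - x (k + 1))"
      by (simp add: algebra_simps)
    also have "\<dots> \<longleftrightarrow> real_of_int (cprime a1 a2 (2 * l + ik k - 1) * (p k - x k)) \<le> real_of_int (cprime a1 a2 (2 * l + ik k) * (p (k + 1) - x (k + 1)))"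
      by linarith
    finally show ?thesis unfolding u_def v_def by simp
  qed
  have rhs: "gamma a1 a2 (k + 1) * p (k + 1) - p k + x k
           - gamma a1 a2 (k + 1) * x (k + 1) = gamma a1 a2 (k+1) * u - v"
    unfolding u_def v_def by (simp add: algebra_simps)
  show ?thesis
  proof (cases "odd k")
    case True
    have ik: "ik k = 1" using True unfolding ik_def by simp
    have g: "gamma a1 a2 (k+1) = alpha a1 a2" using True unfolding gamma_def by simp
    have "(\<forall>l\<ge>1. real_of_int (cprime a1 a2 (2*l)) * v \<le> real_of_int (cprime a1 a2 (2*l+1)) * u)
          \<longleftrightarrow> alpha a1 a2 * u - v \<ge> 0"
    proof (rule key[where e="\<lambda>l. \<mu>^l"])
      show "\<forall>l\<ge>1. real_of_int (cprime a1 a2 (2*l)) \<ge> 1"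
      proof (intro allI impI)
        fix l :: nat assume "l \<ge> 1"
        then obtain m where "l = m+1" by (metis le_add_diff_inverse2)
        hence "2*l = 2*m+2" by simp
        moreover have "cprime a1 a2 (2*m+2) \<ge> 1" using pos by blast
        ultimately show "real_of_int (cprime a1 a2 (2*l)) \<ge> 1" by (simp del: cprime.simps)
      qed
      show "\<forall>l\<ge>1. real_of_int (cprime a1 a2 (2*l+1)) = alpha a1 a2 * real_of_int (cprime a1 a2 (2*l)) + \<mu>^l"
        using E1 by blast
      show "\<forall>l. \<mu>^l \<ge> 0" using mu0 by simp
    qed (use lim u0 al in auto)
    thus ?thesis unfolding p_def[symmetric] unfolding conv rhs unfolding ik g by simp
  next
    case False
    have ik: "ik k = 2" using False unfolding ik_def by simp
    have g: "gamma a1 a2 (k+1) = beta a1 a2" using False unfolding gamma_def by simp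
    have e2: "2*l+2-1 = 2*l+1" for l :: nat by simp
    have lim2: "\<forall>d>0. \<exists>l\<ge>1. beta a1 a2 * \<mu>^(l+1) < d"
    proof (intro allI impI)
      fix d :: real assume "d > 0"
      then obtain l where l: "l \<ge> 1" "\<mu>^l < d / beta a1 a2" using lim al by (meson divide_pos_pos)
      have "\<mu>^(l+1) \<le> \<mu>^l" using mu0 mu1 by (simp add: power_decreasing)
      hence "beta a1 a2 * \<mu>^(l+1) \<le> beta a1 a2 * \<mu>^l" using al by (simp add: mult_left_mono)
      moreover have "beta a1 a2 * \<mu>^l < d" using l(2) al by (simp add: pos_less_divide_eq mult.commute)
      ultimately have "beta a1 a2 * \<mu>^(l+1) < d" by linarith
      thus "\<exists>l\<ge>1. beta a1 a2 * \<mu>^(l+1) < d" using l(1) by blast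
    qed
    have "(\<forall>l\<ge>1. real_of_int (cprime a1 a2 (2*l+1)) * v \<le> real_of_int (cprime a1 a2 (2*l+2)) * u)
          \<longleftrightarrow> beta a1 a2 * u - v \<ge> 0"
    proof (rule key[where e="\<lambda>l. beta a1 a2 * \<mu>^(l+1)"])
      show "\<forall>l\<ge>1. real_of_int (cprime a1 a2 (2*l+1)) \<ge> 1" using pos by simp
      show "\<forall>l\<ge>1. real_of_int (cprime a1 a2 (2*l+2)) = beta a1 a2 * real_of_int (cprime a1 a2 (2*l+1)) + beta a1 a2 * \<mu>^(l+1)"
        using E2 by blast
      show "\<forall>l. beta a1 a2 * \<mu>^(l+1) \<ge> 0" using mu0 al by simp
    qed (use lim2 u0 al in auto)
    thus ?thesis unfolding p_def[symmetric] unfolding conv rhs unfolding ik g e2 by simp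
  qed
qed

end
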